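(* Let $e_1\oplus e_2$ be a subexpression of the clique-width $k$-expression $e_G$ and let $C,N\in[0,\mathcal{N}]^{k\times q}$. Let $N_1\in[0,\mathcal{N}]^{k\times q}$ be defined by $N_1[i,a]=0$ for every $i\in\overline{\ell(e_1)}$ and every color $a$, and $N_1[i,a]=N[i,a]$ for every $i\notin\overline{\ell(e_1)}$ and every color $a$; define $N_2$ analogously with respect to $e_2$. Then $\lambda(e_1\oplus e_2,C,N)$ equals the minimum of $\lambda(e_1,C_1,N_1)\circledast\lambda(e_2,C_2,N_2)$ over all $C_1,C_2\in[0,\mathcal{N}]^{k\times q}$ such that $C_1[i,a]=0$ for all $i\in\overline{\ell(e_1)}$ and all $a$, $C_2[i,a]=0$ for all $i\in\overline{\ell(e_2)}$ and all $a$, and $C[i,a]=\min(\mathcal{N},C_1[i,a]+C_2[i,a])$ for all $i\in[1,k]$ and all $a\in\mathrm{Colors}$.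
   Context: Weight set: $(\mathrm{Weights},\preceq,\circledast)$ where $\preceq$ is a total order with a maximum element $\mathrm{Error}$, $\min$ is the minimum w.r.t. $\preceq$ (minimum of an empty set is $\mathrm{Error}$), and $\circledast$ is commutative, associative, has a neutral element, has absorbing element $\mathrm{Error}$, and satisfies $s_1\preceq s_2\Rightarrow s_1\circledast s_3\preceq s_2\circledast s_3$. A color-counting 1-locally checkable problem is given by a graph $G$, colors $\mathrm{Colors}=\{a_1,\ldots,a_q\}$, nonempty lists $L_v\subseteq\mathrm{Colors}$, weights $w_{v,a}\in\mathrm{Weights}\setminus\{\mathrm{Error}\}$ ($a\in L_v$), and a function $check(v,a,n_1,\ldots,n_q)\in\{\mathrm{True},\mathrm{False}\}$. $\mathcal{N}\in[1,|V(G)|]$ is an integer with $check(v,a,n_1,\ldots,n_q)=check(v,a,\min(\mathcal{N},n_1),\ldots,\min(\mathcal{N},n_q))$ always. $[x,y]=\{x,\ldots,y\}$. $e_G$ is an irredundant clique-width $k$-expression of $G$ (operations $i(v)$, $\oplus$, $\eta_{i,j}$, $\rho_{i\to j}$; irredundant means no join adds an already existing edge), in which every relabeling $\rho_{i\to j}(e)$ has some vertex of $G_e$ of label $j$. For a subexpression $e$, $G_e$ is its labeled graph, $\ell_e(v)$ the label of $v$ in $G_e$, and $\overline{\ell(e)}$ the set of labels in $[1,k]$ carried by no vertex of $G_e$. For $C,N\in[0,\mathcal{N}]^{k\times q}$ (rows = labels, columns = colors), a coloring $c$ of $G_e$ with $c(v)\in L_v$ for all $v$ is a $(C,N)$-coloring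 of $G_e$ if (C1) $\min(\mathcal{N},|\{v\in V(G_e): c(v)=a,\ \ell_e(v)=i\}|)=C[i,a]$ for all $i,a$; and (C2) for all $v\in V(G_e)$, $check(v,c(v),n_1,\ldots,n_q)$ holds with $n_j=\min(\mathcal{N},N[\ell_e(v),a_j]+|\{u\in N_{G_e}(v):c(u)=a_j\}|)$. $\lambda(e,C,N)$ is the minimum of $\circledast_{v\in V(G_e)}w_{v,c(v)}$ over all $(C,N)$-colorings $c$ of $G_e$ ($\mathrm{Error}$ if none). *)

theory Defs
  imports Main
begin

definition weight_set :: "'w::linorder \<Rightarrow> ('w \<Rightarrow> 'w \<Rightarrow> 'w) \<Rightarrow> 'w \<Rightarrow> bool" where
  "weight_set Err op neut \<longleftrightarrow>
     (\<forall>s. s \<le> Err) \<and>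
     (\<forall>s t. op s t = op t s) \<and>
     (\<forall>s t u. op (op s t) u = op s (op t u)) \<and>
     (\<forall>s. op neut s = s) \<and>
     (\<forall>s. op Err s = Err) \<and>
     (\<forall>s1 s2 s3. s1 \<le> s2 \<longrightarrow> op s1 s3 \<le> op s2 s3)"

definition wmin :: "'w::linorder \<Rightarrow> 'w set \<Rightarrow> 'w" where
  "wmin Err S = (if S = {} then Err else Min S)"

definition wprod :: "('w \<Rightarrow> 'w \<Rightarrow> 'w) \<Rightarrow> 'w \<Rightarrow> ('v \<Rightarrow> 'w) \<Rightarrow> 'v set \<Rightarrow> 'w" where
  "wprod op neut g V = Finite_Set.fold (\<lambda>x acc. op (g x) acc) neut V"

datatype 'v cwexp =
    Vertex nat 'v
  | Union "'v cwexp" "'v cwexp"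
  | Join nat nat "'v cwexp"
  | Relabel nat nat "'v cwexp"

fun verts :: "'v cwexp \<Rightarrow> 'v set" where
  "verts (Vertex i v) = {v}"
| "verts (Union e1 e2) = verts e1 \<union> verts e2"
| "verts (Join i j e) = verts e"
| "verts (Relabel i j e) = verts e"

fun lab :: "'v cwexp \<Rightarrow> 'v \<Rightarrow> nat" where
  "lab (Vertex i v) u = i"
| "lab (Union e1 e2) u = (if u \<in> verts e1 then lab e1 u else lab e2 u)"
| "lab (Join i j e) u = lab e u"
| "lab (Relabel i j e) u = (if lab e u = i then j else lab e u)"

fun adj :: "'v cwexp \<Rightarrow> 'v \<Rightarrow> 'v \<Rightarrow> bool" where
  "adj (Vertex i v) x y = False"
| "adj (Union e1 e2) x y = (adj e1 x y \<or> adj e2 x y)"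
| "adj (Join i j e) x y = (adj e x y \<or>
     (x \<in> verts e \<and> y \<in> verts e \<and>
      ((lab e x = i \<and> lab e y = j) \<or> (lab e x = j \<and> lab e y = i))))"
| "adj (Relabel i j e) x y = adj e x y"

fun wf_cw :: "nat \<Rightarrow> 'v cwexp \<Rightarrow> bool" where
  "wf_cw k (Vertex i v) = (i \<in> {1..k})"
| "wf_cw k (Union e1 e2) = (wf_cw k e1 \<and> wf_cw k e2 \<and> verts e1 \<inter> verts e2 = {})"
| "wf_cw k (Join i j e) = (i \<in> {1..k} \<and> j \<in> {1..k} \<and> i \<noteq> j \<and> wf_cw k e)"
| "wf_cw k (Relabel i j e) = (i \<in> {1..k} \<and> j \<in> {1..k} \<and> wf_cw k e)"

fun irredundant :: "'v cwexp \<Rightarrow> bool" where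
  "irredundant (Vertex i v) = True"
| "irredundant (Union e1 e2) = (irredundant e1 \<and> irredundant e2)"
| "irredundant (Join i j e) = (irredundant e \<and>
     \<not> (\<exists>x\<in>verts e. \<exists>y\<in>verts e. adj e x y \<and> lab e x = i \<and> lab e y = j))"
| "irredundant (Relabel i j e) = irredundant e"

fun relabel_ok :: "'v cwexp \<Rightarrow> bool" where
  "relabel_ok (Vertex i v) = True"
| "relabel_ok (Union e1 e2) = (relabel_ok e1 \<and> relabel_ok e2)"
| "relabel_ok (Join i j e) = relabel_ok e"
| "relabel_ok (Relabel i j e) = (relabel_ok e \<and> (\<exists>v\<in>verts e. lab e v = j))"

fun subexprs :: "'v cwexp \<Rightarrow> 'v cwexp set" where
  "subexprs (Vertex i v) = {Vertex i v}"
| "subexprs (Union e1 e2) = insert (Union e1 e2) (subexprs e1 \<union> subexprs e2)"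
| "subexprs (Join i j e) = insert (Join i j e) (subexprs e)"
| "subexprs (Relabel i j e) = insert (Relabel i j e) (subexprs e)"

definition absent_labels :: "nat \<Rightarrow> 'v cwexp \<Rightarrow> nat set" where
  "absent_labels k e = {i \<in> {1..k}. \<not> (\<exists>v\<in>verts e. lab e v = i)}"

definition is_mat :: "nat \<Rightarrow> nat \<Rightarrow> nat \<Rightarrow> (nat \<Rightarrow> nat \<Rightarrow> nat) \<Rightarrow> bool" where
  "is_mat k q NN M \<longleftrightarrow> (\<forall>i a. M i a \<le> NN \<and> ((i \<notin> {1..k} \<or> a \<notin> {1..q}) \<longrightarrow> M i a = 0))"

definition is_CN_coloring ::
  "nat \<Rightarrow> nat \<Rightarrow> nat \<Rightarrow> ('v \<Rightarrow> nat set) \<Rightarrow> ('v \<Rightarrow> nat \<Rightarrow> nat list \<Rightarrow> bool)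
   \<Rightarrow> 'v cwexp \<Rightarrow> (nat \<Rightarrow> nat \<Rightarrow> nat) \<Rightarrow> (nat \<Rightarrow> nat \<Rightarrow> nat) \<Rightarrow> ('v \<Rightarrow> nat) \<Rightarrow> bool" where
  "is_CN_coloring k q NN L check e C N c \<longleftrightarrow>
     (\<forall>v\<in>verts e. c v \<in> L v) \<and>
     (\<forall>i\<in>{1..k}. \<forall>a\<in>{1..q}.
        min NN (card {v \<in> verts e. c v = a \<and> lab e v = i}) = C i a) \<and>
     (\<forall>v\<in>verts e. check v (c v)
        (map (\<lambda>j. min NN (N (lab e v) j + card {u \<in> verts e. adj e v u \<and> c u = j})) [1..<q+1]))"

definition lam ::
  "'w::linorder \<Rightarrow> ('w \<Rightarrow> 'w \<Rightarrow> 'w) \<Rightarrow> 'w \<Rightarrow> ('v \<Rightarrow> nat \<Rightarrow> 'w)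
   \<Rightarrow> nat \<Rightarrow> nat \<Rightarrow> nat \<Rightarrow> ('v \<Rightarrow> nat set) \<Rightarrow> ('v \<Rightarrow> nat \<Rightarrow> nat list \<Rightarrow> bool)
   \<Rightarrow> 'v cwexp \<Rightarrow> (nat \<Rightarrow> nat \<Rightarrow> nat) \<Rightarrow> (nat \<Rightarrow> nat \<Rightarrow> nat) \<Rightarrow> 'w" where
  "lam Err op neut w k q NN L check e C N =
     wmin Err ((\<lambda>c. wprod op neut (\<lambda>v. w v (c v)) (verts e)) `
               {c. is_CN_coloring k q NN L check e C N c})"

end

theory Submission
  imports Defs "HOL-Library.FuncSet"
begin

lemma adj_verts: "adj e x y \<Longrightarrow> x \<in> verts e \<and> y \<in> verts e"
  by (induction e) auto

lemma finite_verts [simp]: "finite (verts e)"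
  by (induction e) auto

lemma sub_wf: "e' \<in> subexprs e \<Longrightarrow> wf_cw k e \<Longrightarrow> wf_cw k e'"
  by (induction e) auto

lemma sub_verts: "e' \<in> subexprs e \<Longrightarrow> verts e' \<subseteq> verts e"
  by (induction e) auto

lemma ws_cm: "weight_set Err op neut \<Longrightarrow> comm_monoid op neut"
  unfolding weight_set_def
  by unfold_locales (auto)

lemma wprod_F: "weight_set Err op neut \<Longrightarrow> wprod op neut g V = comm_monoid_set.F op neut g V"
proof -
  assume "weight_set Err op neut"
  then interpret comm_monoid_set op neut
    using ws_cm unfolding comm_monoid_set_def by blast
  show ?thesis unfolding wprod_def eq_fold comp_def by simp
qed

lemma wprod_cong: "weight_set Err op neut \<Longrightarrow> (\<And>v. v \<in> V \<Longrightarrow> g v = h v) \<Longrightarrow>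
   wprod op neut g V = wprod op neut h V"
proof -
  assume a: "weight_set Err op neut" "\<And>v. v \<in> V \<Longrightarrow> g v = h v"
  then interpret comm_monoid_set op neut
    using ws_cm unfolding comm_monoid_set_def by blast
  show ?thesis using a by (simp add: wprod_F)
qed

lemma wprod_union: "weight_set Err op neut \<Longrightarrow> finite A \<Longrightarrow> finite B \<Longrightarrow> A \<inter> B = {} \<Longrightarrow>
   wprod op neut g (A \<union> B) = op (wprod op neut g A) (wprod op neut g B)"
proof -
  assume a: "weight_set Err op neut" "finite A" "finite B" "A \<inter> B = {}"
  then interpret comm_monoid_set op neut
    using ws_cm unfolding comm_monoid_set_def by blast
  show ?thesis using a by (simp add: wprod_F union_disjoint)
qed

lemma finite_weights:
  assumes ws: "weight_set Err op neut" and fV: "finite V" and fQ: "finite Q"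
    and A: "\<forall>c\<in>A. \<forall>v\<in>V. c v \<in> Q"
  shows "finite ((\<lambda>c. wprod op neut (\<lambda>v. w v (c v)) V) ` A)"
proof -
  have "(\<lambda>c. wprod op neut (\<lambda>v. w v (c v)) V) ` A \<subseteq>
        (\<lambda>c. wprod op neut (\<lambda>v. w v (c v)) V) ` (PiE V (\<lambda>_. Q))"
  proof
    fix x assume "x \<in> (\<lambda>c. wprod op neut (\<lambda>v. w v (c v)) V) ` A"
    then obtain c where c: "c \<in> A" "x = wprod op neut (\<lambda>v. w v (c v)) V" by blast
    have "restrict c V \<in> PiE V (\<lambda>_. Q)" using A c by auto
    moreover have "x = wprod op neut (\<lambda>v. w v (restrict c V v)) V"
      unfolding c(2) by (rule wprod_cong[OF ws]) simp
    ultimately show "x \<in> (\<lambda>c. wprod op neut (\<lambda>v. w v (c v)) V) ` (PiE V (\<lambda>_. Q))" by blast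
  qed
  moreover have "finite (PiE V (\<lambda>_. Q))" using fV fQ by (simp add: finite_PiE)
  ultimately show ?thesis by (meson finite_imageI finite_subset)
qed

lemma wmin_le: "finite S \<Longrightarrow> x \<in> S \<Longrightarrow> wmin Err S \<le> x"
  unfolding wmin_def by auto

lemma wmin_in: "finite S \<Longrightarrow> S \<noteq> {} \<Longrightarrow> wmin Err S \<in> S"
  unfolding wmin_def by auto

lemma le_wmin: "finite R \<Longrightarrow> x \<le> Err \<Longrightarrow> (\<forall>r\<in>R. x \<le> r) \<Longrightarrow> x \<le> wmin Err R"
  unfolding wmin_def by auto

lemma wmin_mono_sub: assumes "finite T" "S \<subseteq> T" shows "wmin Err S \<in> insert Err T"
proof (cases "S = {}")
  case True then show ?thesis by (simp add: wmin_def)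
next
  case False
  have "finite S" using assms finite_subset by blast
  then have "Min S \<in> S" using False by (rule Min_in)
  then show ?thesis using assms False by (auto simp: wmin_def)
qed

lemma restrict1:
  assumes disj: "verts e1 \<inter> verts e2 = {}"
    and c: "is_CN_coloring k q NN L check (Union e1 e2) C N c"
  shows "is_CN_coloring k q NN L check e1
     (\<lambda>i a. if i \<in> {1..k} \<and> a \<in> {1..q} then min NN (card {v\<in>verts e1. c v = a \<and> lab e1 v = i}) else 0)
     (\<lambda>i a. if i \<in> absent_labels k e1 then 0 else N i a) c"
proof -
  have nb: "{u \<in> verts (Union e1 e2). adj (Union e1 e2) v u \<and> c u = j} = {u \<in> verts e1. adj e1 v u \<and> c u = j}"
    if "v \<in> verts e1" for v j
    using adj_verts[of e2 v] adj_verts[of e1 v] disj that by auto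
  have lb: "lab e1 v \<notin> absent_labels k e1" if "v \<in> verts e1" for v
    using that unfolding absent_labels_def by auto
  have lu: "lab (Union e1 e2) v = lab e1 v" if "v \<in> verts e1" for v
    using that by simp
  show ?thesis
    using c unfolding is_CN_coloring_def
    apply (intro conjI)
    subgoal by simp
    subgoal by simp
    subgoal
    proof
      fix v assume v: "v \<in> verts e1"
      then have "check v (c v)
        (map (\<lambda>j. min NN (N (lab (Union e1 e2) v) j + card {u \<in> verts (Union e1 e2). adj (Union e1 e2) v u \<and> c u = j})) [1..<q+1])"
        using c v unfolding is_CN_coloring_def verts.simps by blast
      then show "check v (c v)
        (map (\<lambda>j. min NN ((if lab e1 v \<in> absent_labels k e1 then 0 else N (lab e1 v) j) + card {u \<in> verts e1. adj e1 v u \<and> c u = j})) [1..<q+1])"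
        using nb[OF v] lb[OF v] lu[OF v] by simp
    qed
    done
qed

lemma restrict2:
  assumes disj: "verts e1 \<inter> verts e2 = {}"
    and c: "is_CN_coloring k q NN L check (Union e1 e2) C N c"
  shows "is_CN_coloring k q NN L check e2
     (\<lambda>i a. if i \<in> {1..k} \<and> a \<in> {1..q} then min NN (card {v\<in>verts e2. c v = a \<and> lab e2 v = i}) else 0)
     (\<lambda>i a. if i \<in> absent_labels k e2 then 0 else N i a) c"
proof -
  have nb: "{u \<in> verts (Union e1 e2). adj (Union e1 e2) v u \<and> c u = j} = {u \<in> verts e2. adj e2 v u \<and> c u = j}"
    if "v \<in> verts e2" for v j
    using adj_verts[of e2 v] adj_verts[of e1 v] disj that by auto
  have lb: "lab e2 v \<notin> absent_labels k e2" if "v \<in> verts e2" for v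
    using that unfolding absent_labels_def by auto
  have lu: "lab (Union e1 e2) v = lab e2 v" if "v \<in> verts e2" for v
    using that disj by auto
  show ?thesis
    using c unfolding is_CN_coloring_def
    apply (intro conjI)
    subgoal by simp
    subgoal by simp
    subgoal
    proof
      fix v assume v: "v \<in> verts e2"
      then have "check v (c v)
        (map (\<lambda>j. min NN (N (lab (Union e1 e2) v) j + card {u \<in> verts (Union e1 e2). adj (Union e1 e2) v u \<and> c u = j})) [1..<q+1])"
        using c v unfolding is_CN_coloring_def verts.simps by blast
      then show "check v (c v)
        (map (\<lambda>j. min NN ((if lab e2 v \<in> absent_labels k e2 then 0 else N (lab e2 v) j) + card {u \<in> verts e2. adj e2 v u \<and> c u = j})) [1..<q+1])"
        using nb[OF v] lb[OF v] lu[OF v] by simp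
    qed
    done
qed

lemma combine:
  assumes disj: "verts e1 \<inter> verts e2 = {}"
    and c1: "is_CN_coloring k q NN L check e1 C1 (\<lambda>i a. if i \<in> absent_labels k e1 then 0 else N i a) c1"
    and c2: "is_CN_coloring k q NN L check e2 C2 (\<lambda>i a. if i \<in> absent_labels k e2 then 0 else N i a) c2"
    and hC: "\<forall>i\<in>{1..k}. \<forall>a\<in>{1..q}. C i a = min NN (C1 i a + C2 i a)"
  shows "is_CN_coloring k q NN L check (Union e1 e2) C N (\<lambda>v. if v \<in> verts e1 then c1 v else c2 v)"
proof -
  define c where "c = (\<lambda>v. if v \<in> verts e1 then c1 v else c2 v)"
  have ce1: "c v = c1 v" if "v \<in> verts e1" for v using that c_def by simp
  have ce2: "c v = c2 v" if "v \<in> verts e2" for v using that disj c_def by auto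
  have nb1: "{u \<in> verts (Union e1 e2). adj (Union e1 e2) v u \<and> c u = j} = {u \<in> verts e1. adj e1 v u \<and> c1 u = j}"
    if "v \<in> verts e1" for v j
    using adj_verts[of e2 v] adj_verts[of e1 v] disj that ce1 by auto
  have nb2: "{u \<in> verts (Union e1 e2). adj (Union e1 e2) v u \<and> c u = j} = {u \<in> verts e2. adj e2 v u \<and> c2 u = j}"
    if "v \<in> verts e2" for v j
    using adj_verts[of e2 v] adj_verts[of e1 v] disj that ce2 by auto
  have lb1: "lab e1 v \<notin> absent_labels k e1" if "v \<in> verts e1" for v
    using that unfolding absent_labels_def by auto
  have lb2: "lab e2 v \<notin> absent_labels k e2" if "v \<in> verts e2" for v
    using that unfolding absent_labels_def by auto
  have lu1: "lab (Union e1 e2) v = lab e1 v" if "v \<in> verts e1" for v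
    using that by simp
  have lu2: "lab (Union e1 e2) v = lab e2 v" if "v \<in> verts e2" for v
    using that disj by auto
  have "is_CN_coloring k q NN L check (Union e1 e2) C N c"
    unfolding is_CN_coloring_def
  proof (intro conjI ballI)
    fix v assume "v \<in> verts (Union e1 e2)"
    then show "c v \<in> L v" using c1 c2 ce1 ce2 unfolding is_CN_coloring_def by auto
  next
    fix i a assume i: "i \<in> {1..k}" and a: "a \<in> {1..q}"
    have "{v \<in> verts (Union e1 e2). c v = a \<and> lab (Union e1 e2) v = i} =
          {v\<in>verts e1. c1 v = a \<and> lab e1 v = i} \<union> {v\<in>verts e2. c2 v = a \<and> lab e2 v = i}"
      using ce1 ce2 lu1 lu2 disj by auto
    moreover have "card ({v\<in>verts e1. c1 v = a \<and> lab e1 v = i} \<union> {v\<in>verts e2. c2 v = a \<and> lab e2 v = i})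
       = card {v\<in>verts e1. c1 v = a \<and> lab e1 v = i} + card {v\<in>verts e2. c2 v = a \<and> lab e2 v = i}"
      by (rule card_Un_disjoint) (use disj finite_verts in auto)
    moreover have "min NN (card {v\<in>verts e1. c1 v = a \<and> lab e1 v = i}) = C1 i a"
      using c1 i a unfolding is_CN_coloring_def by blast
    moreover have "min NN (card {v\<in>verts e2. c2 v = a \<and> lab e2 v = i}) = C2 i a"
      using c2 i a unfolding is_CN_coloring_def by blast
    ultimately show "min NN (card {v \<in> verts (Union e1 e2). c v = a \<and> lab (Union e1 e2) v = i}) = C i a"
      using hC i a by auto
  next
    fix v assume "v \<in> verts (Union e1 e2)"
    then consider "v \<in> verts e1" | "v \<in> verts e2" by auto
    then show "check v (c v)
        (map (\<lambda>j. min NN (N (lab (Union e1 e2) v) j + card {u \<in> verts (Union e1 e2). adj (Union e1 e2) v u \<and> c u = j})) [1..<q+1])"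
    proof cases
      case 1
      then show ?thesis using c1 nb1[OF 1] lb1[OF 1] lu1[OF 1] ce1[OF 1]
        unfolding is_CN_coloring_def by auto
    next
      case 2
      then show ?thesis using c2 nb2[OF 2] lb2[OF 2] lu2[OF 2] ce2[OF 2]
        unfolding is_CN_coloring_def by auto
    qed
  qed
  then show ?thesis unfolding c_def .
qed

lemma count_split:
  assumes disj: "verts e1 \<inter> verts e2 = {}"
  shows "card {v \<in> verts (Union e1 e2). c v = a \<and> lab (Union e1 e2) v = i} =
     card {v\<in>verts e1. c v = a \<and> lab e1 v = i} + card {v\<in>verts e2. c v = a \<and> lab e2 v = i}"
proof -
  have "{v \<in> verts (Union e1 e2). c v = a \<and> lab (Union e1 e2) v = i} =
          {v\<in>verts e1. c v = a \<and> lab e1 v = i} \<union> {v\<in>verts e2. c v = a \<and> lab e2 v = i}"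
    using disj by auto
  moreover have "card ({v\<in>verts e1. c v = a \<and> lab e1 v = i} \<union> {v\<in>verts e2. c v = a \<and> lab e2 v = i})
       = card {v\<in>verts e1. c v = a \<and> lab e1 v = i} + card {v\<in>verts e2. c v = a \<and> lab e2 v = i}"
    by (rule card_Un_disjoint) (use disj in auto)
  ultimately show ?thesis by simp
qed

theorem lemma3:
  fixes Err :: "'w::linorder" and op :: "'w \<Rightarrow> 'w \<Rightarrow> 'w" and neut :: 'w
    and w :: "'v \<Rightarrow> nat \<Rightarrow> 'w"
    and k q NN :: nat and L :: "'v \<Rightarrow> nat set" and check :: "'v \<Rightarrow> nat \<Rightarrow> nat list \<Rightarrow> bool"
    and eG e1 e2 :: "'v cwexp" and C N :: "nat \<Rightarrow> nat \<Rightarrow> nat"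
  assumes ws: "weight_set Err op neut"
    and lists: "\<forall>v\<in>verts eG. L v \<noteq> {} \<and> L v \<subseteq> {1..q}"
    and weights: "\<forall>v\<in>verts eG. \<forall>a\<in>L v. w v a \<noteq> Err"
    and NN: "1 \<le> NN" "NN \<le> card (verts eG)"
    and check_inv: "\<forall>v a ns. length ns = q \<longrightarrow> check v a ns = check v a (map (min NN) ns)"
    and wf: "wf_cw k eG" and irr: "irredundant eG" and rel: "relabel_ok eG"
    and sub: "Union e1 e2 \<in> subexprs eG"
    and C: "is_mat k q NN C" and N: "is_mat k q NN N"
  shows "lam Err op neut w k q NN L check (Union e1 e2) C N =
    wmin Err {op (lam Err op neut w k q NN L check e1 C1
                    (\<lambda>i a. if i \<in> absent_labels k e1 then 0 else N i a))
                 (lam Err op neut w k q NN L check e2 C2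
                    (\<lambda>i a. if i \<in> absent_labels k e2 then 0 else N i a)) | C1 C2.
       is_mat k q NN C1 \<and> is_mat k q NN C2 \<and>
       (\<forall>i\<in>absent_labels k e1. \<forall>a\<in>{1..q}. C1 i a = 0) \<and>
       (\<forall>i\<in>absent_labels k e2. \<forall>a\<in>{1..q}. C2 i a = 0) \<and>
       (\<forall>i\<in>{1..k}. \<forall>a\<in>{1..q}. C i a = min NN (C1 i a + C2 i a))}"
    (is "?L = wmin Err ?R")
proof -
  let ?N1 = "\<lambda>i a. if i \<in> absent_labels k e1 then 0 else N i a"
  let ?N2 = "\<lambda>i a. if i \<in> absent_labels k e2 then 0 else N i a"
  let ?U = "Union e1 e2"
  have top: "\<forall>s. s \<le> Err" and comm: "\<forall>s t. op s t = op t s" and absE: "\<forall>s. op Err s = Err"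
    and mono: "\<forall>s1 s2 s3. s1 \<le> s2 \<longrightarrow> op s1 s3 \<le> op s2 s3"
    using ws unfolding weight_set_def by auto
  have mono2: "op a b \<le> op a' b'" if "a \<le> a'" "b \<le> b'" for a b a' b'
  proof -
    have "op a b \<le> op a' b" using mono that by blast
    also have "op a' b = op b a'" using comm by blast
    also have "\<dots> \<le> op b' a'" using mono that by blast
    also have "\<dots> = op a' b'" using comm by blast
    finally show ?thesis .
  qed
  have wfU: "wf_cw k ?U" using sub_wf[OF sub wf] .
  hence disj: "verts e1 \<inter> verts e2 = {}" by simp
  have vU: "verts ?U \<subseteq> verts eG" using sub_verts[OF sub] .
  hence v1: "verts e1 \<subseteq> verts eG" and v2: "verts e2 \<subseteq> verts eG" by auto
  define col where "col e C' N' = {c. is_CN_coloring k q NN L check e C' N' c}" for e C' N'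
  define wt where "wt e c = wprod op neut (\<lambda>v. w v (c v)) (verts e)" for e c
  define T where "T e = wt e ` {c. \<forall>v\<in>verts e. c v \<in> {1..q}}" for e
  have lamE: "lam Err op neut w k q NN L check e C' N' = wmin Err (wt e ` col e C' N')" for e C' N'
    unfolding lam_def col_def wt_def ..
  have finT: "finite (T e)" for e
    unfolding T_def wt_def
    by (rule finite_weights[OF ws finite_verts, of "{1..q}"]) auto
  have subT: "wt e ` col e C' N' \<subseteq> T e" if "verts e \<subseteq> verts eG" for e C' N'
    unfolding T_def col_def is_CN_coloring_def using that lists by fastforce
  have fin: "finite (wt e ` col e C' N')" if "verts e \<subseteq> verts eG" for e C' N'
    using finite_subset[OF subT[OF that] finT] .
  have lamT: "lam Err op neut w k q NN L check e C' N' \<in> insert Err (T e)" if "verts e \<subseteq> verts eG" for e C' N'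
    unfolding lamE using wmin_mono_sub[OF finT subT[OF that]] .
  have finR: "finite ?R"
  proof -
    have "?R \<subseteq> (\<lambda>(x,y). op x y) ` (insert Err (T e1) \<times> insert Err (T e2))"
    proof
      fix x assume "x \<in> ?R"
      then obtain C1 C2 where x: "x = op (lam Err op neut w k q NN L check e1 C1 ?N1)
                 (lam Err op neut w k q NN L check e2 C2 ?N2)" by blast
      show "x \<in> (\<lambda>(x,y). op x y) ` (insert Err (T e1) \<times> insert Err (T e2))"
        unfolding x
        apply (rule image_eqI[of _ _ "(lam Err op neut w k q NN L check e1 C1 ?N1, lam Err op neut w k q NN L check e2 C2 ?N2)"])
         apply simp
        using lamT[OF v1, of C1 ?N1] lamT[OF v2, of C2 ?N2] by blast
    qed
    moreover have "finite ((\<lambda>(x,y). op x y) ` (insert Err (T e1) \<times> insert Err (T e2)))"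
      by (intro finite_imageI finite_cartesian_product) (auto simp: finT)
    ultimately show ?thesis using finite_subset by blast
  qed
  have finL: "finite (wt ?U ` col ?U C N)" using fin[OF vU] .
  have wtU: "wt ?U c = op (wt e1 c1) (wt e2 c2)"
    if "\<And>v. v \<in> verts e1 \<Longrightarrow> c v = c1 v" "\<And>v. v \<in> verts e2 \<Longrightarrow> c v = c2 v" for c c1 c2
  proof -
    have "wt ?U c = op (wt e1 c) (wt e2 c)"
      unfolding wt_def using wprod_union[OF ws finite_verts finite_verts disj] by simp
    moreover have "wt e1 c = wt e1 c1" unfolding wt_def by (rule wprod_cong[OF ws]) (simp add: that(1))
    moreover have "wt e2 c = wt e2 c2" unfolding wt_def by (rule wprod_cong[OF ws]) (simp add: that(2))
    ultimately show ?thesis by simp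
  qed
  have A: "wmin Err (wt ?U ` col ?U C N) \<le> r" if r: "r \<in> ?R" for r
  proof -
    obtain C1 C2 where rr: "r = op (lam Err op neut w k q NN L check e1 C1 ?N1)
                 (lam Err op neut w k q NN L check e2 C2 ?N2)"
      and hC: "\<forall>i\<in>{1..k}. \<forall>a\<in>{1..q}. C i a = min NN (C1 i a + C2 i a)"
      using r by (elim CollectE exE conjE) (rule that, assumption+)
    show ?thesis
    proof (cases "col e1 C1 ?N1 = {} \<or> col e2 C2 ?N2 = {}")
      case True
      then have "wt e1 ` col e1 C1 ?N1 = {} \<or> wt e2 ` col e2 C2 ?N2 = {}" by blast
      then have "lam Err op neut w k q NN L check e1 C1 ?N1 = Err \<or> lam Err op neut w k q NN L check e2 C2 ?N2 = Err"
        unfolding lamE wmin_def by presburger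
      then have "r = Err"
      proof
        assume "lam Err op neut w k q NN L check e1 C1 ?N1 = Err"
        then show "r = Err" unfolding rr using absE by simp
      next
        assume "lam Err op neut w k q NN L check e2 C2 ?N2 = Err"
        then show "r = Err" unfolding rr
          using absE[rule_format, of "lam Err op neut w k q NN L check e1 C1 ?N1"]
            comm[rule_format, of "lam Err op neut w k q NN L check e1 C1 ?N1" Err] by simp
      qed
      then show ?thesis using top by simp
    next
      case False
      then have ne1: "wt e1 ` col e1 C1 ?N1 \<noteq> {}" and ne2: "wt e2 ` col e2 C2 ?N2 \<noteq> {}" by auto
      obtain c1 where c1: "c1 \<in> col e1 C1 ?N1" "lam Err op neut w k q NN L check e1 C1 ?N1 = wt e1 c1"
        using wmin_in[OF fin[OF v1] ne1] unfolding lamE by blast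
      obtain c2 where c2: "c2 \<in> col e2 C2 ?N2" "lam Err op neut w k q NN L check e2 C2 ?N2 = wt e2 c2"
        using wmin_in[OF fin[OF v2] ne2] unfolding lamE by blast
      define c where "c = (\<lambda>v. if v \<in> verts e1 then c1 v else c2 v)"
      have cc1: "is_CN_coloring k q NN L check e1 C1 ?N1 c1" using c1(1) unfolding col_def by simp
      have cc2: "is_CN_coloring k q NN L check e2 C2 ?N2 c2" using c2(1) unfolding col_def by simp
      have "c \<in> col ?U C N"
        using combine[OF disj cc1 cc2 hC] unfolding col_def c_def by simp
      moreover have "wt ?U c = r"
        unfolding rr c1(2) c2(2) by (rule wtU) (use disj in \<open>auto simp: c_def\<close>)
      ultimately show ?thesis using wmin_le[OF finL] by blast
    qed
  qed
  have B: "wmin Err ?R \<le> s" if s: "s \<in> wt ?U ` col ?U C N" for s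
  proof -
    obtain c where c: "c \<in> col ?U C N" "s = wt ?U c" using s by blast
    have cc: "is_CN_coloring k q NN L check ?U C N c" using c(1) unfolding col_def by simp
    define C1 where "C1 = (\<lambda>i a. if i \<in> {1..k} \<and> a \<in> {1..q} then min NN (card {v\<in>verts e1. c v = a \<and> lab e1 v = i}) else 0)"
    define C2 where "C2 = (\<lambda>i a. if i \<in> {1..k} \<and> a \<in> {1..q} then min NN (card {v\<in>verts e2. c v = a \<and> lab e2 v = i}) else 0)"
    have m1: "is_mat k q NN C1" unfolding is_mat_def C1_def by auto
    have m2: "is_mat k q NN C2" unfolding is_mat_def C2_def by auto
    have a1: "\<forall>i\<in>absent_labels k e1. \<forall>a\<in>{1..q}. C1 i a = 0"
    proof (intro ballI)
      fix i a assume "i \<in> absent_labels k e1" "a \<in> {1..q}"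
      then have "{v\<in>verts e1. c v = a \<and> lab e1 v = i} = {}" unfolding absent_labels_def by auto
      then have h: "card {v\<in>verts e1. c v = a \<and> lab e1 v = i} = 0" by (metis card.empty)
      show "C1 i a = 0" unfolding C1_def by (simp only: h min_0R if_cancel)
    qed
    have a2: "\<forall>i\<in>absent_labels k e2. \<forall>a\<in>{1..q}. C2 i a = 0"
    proof (intro ballI)
      fix i a assume "i \<in> absent_labels k e2" "a \<in> {1..q}"
      then have "{v\<in>verts e2. c v = a \<and> lab e2 v = i} = {}" unfolding absent_labels_def by auto
      then have h: "card {v\<in>verts e2. c v = a \<and> lab e2 v = i} = 0" by (metis card.empty)
      show "C2 i a = 0" unfolding C2_def by (simp only: h min_0R if_cancel)
    qed
    have hC: "\<forall>i\<in>{1..k}. \<forall>a\<in>{1..q}. C i a = min NN (C1 i a + C2 i a)"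
    proof (intro ballI)
      fix i a assume i: "i \<in> {1..k}" and a: "a \<in> {1..q}"
      have "C i a = min NN (card {v \<in> verts ?U. c v = a \<and> lab ?U v = i})"
        using cc i a unfolding is_CN_coloring_def by simp
      also have "\<dots> = min NN (card {v\<in>verts e1. c v = a \<and> lab e1 v = i} + card {v\<in>verts e2. c v = a \<and> lab e2 v = i})"
        by (simp only: count_split[OF disj])
      also have "\<dots> = min NN (C1 i a + C2 i a)" unfolding C1_def C2_def using i a by simp
      finally show "C i a = min NN (C1 i a + C2 i a)" .
    qed
    let ?r = "op (lam Err op neut w k q NN L check e1 C1 ?N1) (lam Err op neut w k q NN L check e2 C2 ?N2)"
    have rR: "?r \<in> ?R"
      apply (rule CollectI)
      apply (rule exI[of _ C1], rule exI[of _ C2])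
      using m1 m2 a1 a2 hC by simp
    have l1: "lam Err op neut w k q NN L check e1 C1 ?N1 \<le> wt e1 c"
      unfolding lamE apply (rule wmin_le[OF fin[OF v1]])
      apply (rule imageI, unfold col_def mem_Collect_eq C1_def)
      by (rule restrict1[OF disj cc])
    have l2: "lam Err op neut w k q NN L check e2 C2 ?N2 \<le> wt e2 c"
      unfolding lamE apply (rule wmin_le[OF fin[OF v2]])
      apply (rule imageI, unfold col_def mem_Collect_eq C2_def)
      by (rule restrict2[OF disj cc])
    have "wmin Err ?R \<le> ?r" using wmin_le[OF finR rR] .
    also have "\<dots> \<le> op (wt e1 c) (wt e2 c)" using mono2[OF l1 l2] .
    also have "\<dots> = s" unfolding c(2) by (rule wtU[symmetric]) auto
    finally show ?thesis .
  qed
  have LE: "?L = wmin Err (wt ?U ` col ?U C N)" by (rule lamE)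
  have "wmin Err (wt ?U ` col ?U C N) \<le> wmin Err ?R"
    apply (rule le_wmin[OF finR])
    using top apply blast
    using A by blast
  moreover have "wmin Err ?R \<le> wmin Err (wt ?U ` col ?U C N)"
    apply (rule le_wmin[OF finL])
    using top apply blast
    using B by blast
  ultimately have "wmin Err (wt ?U ` col ?U C N) = wmin Err ?R" by (rule antisym)
  with LE show ?thesis by (rule trans)
qed

end
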